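(* Let $X$ be a real random variable with finite cumulative information generating function (CIGF), and let $Y=\gamma X+\delta$ with $\gamma\in\mathbb{R}\setminus\{0\}$ and $\delta\in\mathbb{R}$. Then $$G_Y(\alpha,\beta)=\begin{cases}\gamma\,G_X(\alpha,\beta), & 0<\gamma<\infty,\\ |\gamma|\,G_X(\beta,\alpha), & -\infty<\gamma<0,\end{cases}$$ for $(\alpha,\beta)\in D_X$ if $0<\gamma<\infty$, and for $(\beta,\alpha)\in D_X$ if $-\infty<\gamma<0$.
   Context: For a random variable $X$ with CDF $F(x)=\mathbb{P}(X\le x)$ and survival function $\overline F(x)=1-F(x)$, let $l=\inf\{x\in\mathbb{R}:F(x)>0\}$ and $r=\sup\{x\in\mathbb{R}:\overline F(x)>0\}$ (possibly infinite). The cumulative information generating function (CIGF) of $X$ is $G_X(\alpha,\beta)=\int_l^r [F(x)]^\alpha[\overline F(x)]^\beta\,dx$, defined on $D_X=\{(\alpha,\beta)\in\mathbb{R}^2: G_X(\alpha,\beta)<+\infty\}$. *)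

theory Defs
  imports "HOL-Probability.Probability"
begin

definition rv_cdf :: "'a measure \<Rightarrow> ('a \<Rightarrow> real) \<Rightarrow> real \<Rightarrow> real" where
  "rv_cdf M X = cdf (distr M borel X)"

definition rv_surv :: "'a measure \<Rightarrow> ('a \<Rightarrow> real) \<Rightarrow> real \<Rightarrow> real" where
  "rv_surv M X x = 1 - rv_cdf M X x"

definition supp_l :: "'a measure \<Rightarrow> ('a \<Rightarrow> real) \<Rightarrow> ereal" where
  "supp_l M X = Inf (ereal ` {x. rv_cdf M X x > 0})"

definition supp_r :: "'a measure \<Rightarrow> ('a \<Rightarrow> real) \<Rightarrow> ereal" where
  "supp_r M X = Sup (ereal ` {x. rv_surv M X x > 0})"

definition cigf :: "'a measure \<Rightarrow> ('a \<Rightarrow> real) \<Rightarrow> real \<Rightarrow> real \<Rightarrow> ennreal" where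
  "cigf M X \<alpha> \<beta> =
     (\<integral>\<^sup>+ x \<in> {x. supp_l M X < ereal x \<and> ereal x < supp_r M X}.
        ennreal (rv_cdf M X x powr \<alpha> * rv_surv M X x powr \<beta>) \<partial>lborel)"

definition cigf_dom :: "'a measure \<Rightarrow> ('a \<Rightarrow> real) \<Rightarrow> (real \<times> real) set" where
  "cigf_dom M X = {(\<alpha>, \<beta>). cigf M X \<alpha> \<beta> < \<infinity>}"

end

theory Submission
  imports Defs
begin

lemma cdf_eq:
  assumes "prob_space M" "X \<in> borel_measurable M"
  shows "rv_cdf M X x = measure M {\<omega>\<in>space M. X \<omega> \<le> x}"
  unfolding rv_cdf_def cdf_def using assms
  by (subst measure_distr) (auto simp: vimage_def Int_def conj_commute)

lemma surv_eq:
  assumes "prob_space M" "X \<in> borel_measurable M"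
  shows "rv_surv M X x = measure M {\<omega>\<in>space M. x < X \<omega>}"
proof -
  interpret prob_space M by fact
  have "space M - {\<omega>\<in>space M. X \<omega> \<le> x} = {\<omega>\<in>space M. x < X \<omega>}" by auto
  moreover have "{\<omega>\<in>space M. X \<omega> \<le> x} \<in> events" using assms(2) by measurable
  ultimately show ?thesis unfolding rv_surv_def cdf_eq[OF assms]
    by (metis prob_compl)
qed

lemma mem_iff: "(supp_l M X < ereal x \<and> ereal x < supp_r M X) \<longleftrightarrow>
   (\<exists>z<x. rv_cdf M X z > 0) \<and> (\<exists>z>x. rv_surv M X z > 0)"
  unfolding supp_l_def supp_r_def Inf_less_iff less_Sup_iff by auto

lemma set_meas: "{x::real. l < ereal x \<and> ereal x < r} \<in> sets borel"
  by measurable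

lemma cdf_mono:
  assumes "prob_space M" "X \<in> borel_measurable M"
  shows "mono (rv_cdf M X)"
proof
  interpret prob_space M by fact
  fix x y :: real assume "x \<le> y"
  then show "rv_cdf M X x \<le> rv_cdf M X y" unfolding cdf_eq[OF assms]
    using assms(2) by (intro finite_measure_mono) auto
qed

lemma integrand_meas:
  assumes "prob_space M" "X \<in> borel_measurable M"
  shows "(\<lambda>x. ennreal (rv_cdf M X x powr a * rv_surv M X x powr b) *
     indicator {x. supp_l M X < ereal x \<and> ereal x < supp_r M X} x) \<in> borel_measurable borel"
proof -
  have [measurable]: "rv_cdf M X \<in> borel_measurable borel"
    by (rule borel_measurable_mono[OF cdf_mono[OF assms]])
  have [measurable]: "{x::real. supp_l M X < ereal x \<and> ereal x < supp_r M X} \<in> sets borel"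
    by (rule set_meas)
  show ?thesis unfolding rv_surv_def by measurable
qed

lemma cigf_alt:
  "cigf M X a b = (\<integral>\<^sup>+x. ennreal (rv_cdf M X x powr a * rv_surv M X x powr b) *
     indicator {x. supp_l M X < ereal x \<and> ereal x < supp_r M X} x \<partial>lborel)"
  unfolding cigf_def by simp

lemma cigf_affine:
  assumes "prob_space M" "Y \<in> borel_measurable M" "(\<gamma>::real) \<noteq> 0"
  shows "cigf M Y a b = ennreal \<bar>\<gamma>\<bar> * (\<integral>\<^sup>+x. ennreal (rv_cdf M Y (\<delta> + \<gamma> * x) powr a * rv_surv M Y (\<delta> + \<gamma> * x) powr b) *
     indicator {x. supp_l M Y < ereal x \<and> ereal x < supp_r M Y} (\<delta> + \<gamma> * x) \<partial>lborel)"
  unfolding cigf_alt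
  by (rule nn_integral_real_affine[OF integrand_meas[OF assms(1,2)] assms(3)])

lemma pos_case:
  assumes "prob_space M" "X \<in> borel_measurable M" "(\<gamma>::real) > 0"
  shows "cigf M (\<lambda>\<omega>. \<gamma> * X \<omega> + \<delta>) a b = ennreal \<gamma> * cigf M X a b"
proof -
  define Y where "Y = (\<lambda>\<omega>. \<gamma> * X \<omega> + \<delta>)"
  have Ym: "Y \<in> borel_measurable M" unfolding Y_def using assms(2) by measurable
  have F: "rv_cdf M Y z = rv_cdf M X ((z - \<delta>) / \<gamma>)" for z
    unfolding cdf_eq[OF assms(1) Ym] cdf_eq[OF assms(1,2)] unfolding Y_def
    using assms(3) by (intro arg_cong[where f="measure M"] Collect_cong) (auto simp: field_simps)
  have S: "rv_surv M Y z = rv_surv M X ((z - \<delta>) / \<gamma>)" for z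
    unfolding rv_surv_def F ..
  have e1: "(\<exists>z<\<delta> + \<gamma> * x. rv_cdf M X ((z - \<delta>) / \<gamma>) > 0) \<longleftrightarrow> (\<exists>u<x. rv_cdf M X u > 0)" for x
  proof
    assume "\<exists>z<\<delta> + \<gamma> * x. rv_cdf M X ((z - \<delta>) / \<gamma>) > 0"
    then obtain z where "z < \<delta> + \<gamma> * x" "rv_cdf M X ((z - \<delta>) / \<gamma>) > 0" by blast
    moreover have "(z - \<delta>) / \<gamma> < x" using calculation(1) assms(3) by (simp add: field_simps)
    ultimately show "\<exists>u<x. rv_cdf M X u > 0" by blast
  next
    assume "\<exists>u<x. rv_cdf M X u > 0"
    then obtain u where "u < x" "rv_cdf M X u > 0" by blast
    moreover have "\<delta> + \<gamma> * u < \<delta> + \<gamma> * x" using calculation(1) assms(3) by simp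
    moreover have "((\<delta> + \<gamma> * u) - \<delta>) / \<gamma> = u" using assms(3) by simp
    ultimately show "\<exists>z<\<delta> + \<gamma> * x. rv_cdf M X ((z - \<delta>) / \<gamma>) > 0" by metis
  qed
  have e2: "(\<exists>z>\<delta> + \<gamma> * x. rv_surv M X ((z - \<delta>) / \<gamma>) > 0) \<longleftrightarrow> (\<exists>u>x. rv_surv M X u > 0)" for x
  proof
    assume "\<exists>z>\<delta> + \<gamma> * x. rv_surv M X ((z - \<delta>) / \<gamma>) > 0"
    then obtain z where "z > \<delta> + \<gamma> * x" "rv_surv M X ((z - \<delta>) / \<gamma>) > 0" by blast
    moreover have "(z - \<delta>) / \<gamma> > x" using calculation(1) assms(3) by (simp add: field_simps)
    ultimately show "\<exists>u>x. rv_surv M X u > 0" by blast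
  next
    assume "\<exists>u>x. rv_surv M X u > 0"
    then obtain u where "u > x" "rv_surv M X u > 0" by blast
    moreover have "\<delta> + \<gamma> * u > \<delta> + \<gamma> * x" using calculation(1) assms(3) by simp
    moreover have "((\<delta> + \<gamma> * u) - \<delta>) / \<gamma> = u" using assms(3) by simp
    ultimately show "\<exists>z>\<delta> + \<gamma> * x. rv_surv M X ((z - \<delta>) / \<gamma>) > 0" by metis
  qed
  have pt: "ennreal (rv_cdf M Y (\<delta> + \<gamma> * x) powr a * rv_surv M Y (\<delta> + \<gamma> * x) powr b) *
     indicator {x. supp_l M Y < ereal x \<and> ereal x < supp_r M Y} (\<delta> + \<gamma> * x)
   = ennreal (rv_cdf M X x powr a * rv_surv M X x powr b) *
     indicator {x. supp_l M X < ereal x \<and> ereal x < supp_r M X} x" for x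
  proof -
    have "((\<delta> + \<gamma> * x) - \<delta>) / \<gamma> = x" using assms(3) by simp
    moreover have "(\<delta> + \<gamma> * x \<in> {x. supp_l M Y < ereal x \<and> ereal x < supp_r M Y}) =
       (x \<in> {x. supp_l M X < ereal x \<and> ereal x < supp_r M X})"
      unfolding mem_Collect_eq mem_iff F S e1 e2 ..
    ultimately show ?thesis unfolding F S indicator_def by simp
  qed
  have "cigf M Y a b = ennreal \<bar>\<gamma>\<bar> * (\<integral>\<^sup>+x. ennreal (rv_cdf M Y (\<delta> + \<gamma> * x) powr a * rv_surv M Y (\<delta> + \<gamma> * x) powr b) *
     indicator {x. supp_l M Y < ereal x \<and> ereal x < supp_r M Y} (\<delta> + \<gamma> * x) \<partial>lborel)"
    by (rule cigf_affine[OF assms(1) Ym]) (use assms(3) in simp)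
  also have "\<dots> = ennreal \<bar>\<gamma>\<bar> * cigf M X a b"
    unfolding pt cigf_alt[of M X] ..
  finally have "cigf M Y a b = ennreal \<bar>\<gamma>\<bar> * cigf M X a b" .
  then show ?thesis using assms(3) unfolding Y_def by simp
qed
lemma neg_case:
  assumes "prob_space M" "X \<in> borel_measurable M" "(\<gamma>::real) < 0"
  shows "cigf M (\<lambda>\<omega>. \<gamma> * X \<omega> + \<delta>) a b = ennreal \<bar>\<gamma>\<bar> * cigf M X b a"
proof -
  interpret prob_space M by fact
  define Y where "Y = (\<lambda>\<omega>. \<gamma> * X \<omega> + \<delta>)"
  define G where "G u = measure M {\<omega>\<in>space M. u \<le> X \<omega>}" for u
  define H where "H u = measure M {\<omega>\<in>space M. X \<omega> < u}" for u
  have Ym: "Y \<in> borel_measurable M" unfolding Y_def using assms(2) by measurable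
  have F: "rv_cdf M Y z = G ((z - \<delta>) / \<gamma>)" for z
    unfolding cdf_eq[OF assms(1) Ym] G_def unfolding Y_def
    using assms(3) by (intro arg_cong[where f="measure M"] Collect_cong) (auto simp: field_simps)
  have S: "rv_surv M Y z = H ((z - \<delta>) / \<gamma>)" for z
    unfolding surv_eq[OF assms(1) Ym] H_def unfolding Y_def
    using assms(3) by (intro arg_cong[where f="measure M"] Collect_cong) (auto simp: field_simps)
  have FX: "rv_cdf M X u = measure M {\<omega>\<in>space M. X \<omega> \<le> u}" for u by (rule cdf_eq[OF assms(1,2)])
  have SX: "rv_surv M X u = measure M {\<omega>\<in>space M. u < X \<omega>}" for u by (rule surv_eq[OF assms(1,2)])
  have eG: "(\<exists>u>x. G u > 0) \<longleftrightarrow> (\<exists>u>x. rv_surv M X u > 0)" for x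
  proof
    assume "\<exists>u>x. G u > 0"
    then obtain u where u: "u > x" "G u > 0" by blast
    have "G u \<le> rv_surv M X ((x + u) / 2)" unfolding G_def SX
      using u(1) assms(2) by (intro finite_measure_mono) auto
    then show "\<exists>u>x. rv_surv M X u > 0" using u by (intro exI[of _ "(x + u) / 2"]) auto
  next
    assume "\<exists>u>x. rv_surv M X u > 0"
    then obtain u where u: "u > x" "rv_surv M X u > 0" by blast
    have "rv_surv M X u \<le> G u" unfolding G_def SX
      using assms(2) by (intro finite_measure_mono) auto
    then show "\<exists>u>x. G u > 0" using u by auto
  qed
  have eH: "(\<exists>u<x. H u > 0) \<longleftrightarrow> (\<exists>u<x. rv_cdf M X u > 0)" for x
  proof
    assume "\<exists>u<x. H u > 0"
    then obtain u where u: "u < x" "H u > 0" by blast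
    have "H u \<le> rv_cdf M X u" unfolding H_def FX
      using assms(2) by (intro finite_measure_mono) auto
    then show "\<exists>u<x. rv_cdf M X u > 0" using u by auto
  next
    assume "\<exists>u<x. rv_cdf M X u > 0"
    then obtain u where u: "u < x" "rv_cdf M X u > 0" by blast
    have "rv_cdf M X u \<le> H ((x + u) / 2)" unfolding H_def FX
      using u(1) assms(2) by (intro finite_measure_mono) auto
    then show "\<exists>u<x. H u > 0" using u by (intro exI[of _ "(x + u) / 2"]) auto
  qed
  have e1: "(\<exists>z<\<delta> + \<gamma> * x. G ((z - \<delta>) / \<gamma>) > 0) \<longleftrightarrow> (\<exists>u>x. G u > 0)" for x
  proof
    assume "\<exists>z<\<delta> + \<gamma> * x. G ((z - \<delta>) / \<gamma>) > 0"
    then obtain z where "z < \<delta> + \<gamma> * x" "G ((z - \<delta>) / \<gamma>) > 0" by blast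
    moreover have "(z - \<delta>) / \<gamma> > x" using calculation(1) assms(3) by (simp add: field_simps)
    ultimately show "\<exists>u>x. G u > 0" by blast
  next
    assume "\<exists>u>x. G u > 0"
    then obtain u where "u > x" "G u > 0" by blast
    moreover have "\<delta> + \<gamma> * u < \<delta> + \<gamma> * x" using calculation(1) assms(3) by simp
    moreover have "((\<delta> + \<gamma> * u) - \<delta>) / \<gamma> = u" using assms(3) by simp
    ultimately show "\<exists>z<\<delta> + \<gamma> * x. G ((z - \<delta>) / \<gamma>) > 0" by metis
  qed
  have e2: "(\<exists>z>\<delta> + \<gamma> * x. H ((z - \<delta>) / \<gamma>) > 0) \<longleftrightarrow> (\<exists>u<x. H u > 0)" for x
  proof
    assume "\<exists>z>\<delta> + \<gamma> * x. H ((z - \<delta>) / \<gamma>) > 0"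
    then obtain z where "z > \<delta> + \<gamma> * x" "H ((z - \<delta>) / \<gamma>) > 0" by blast
    moreover have "(z - \<delta>) / \<gamma> < x" using calculation(1) assms(3) by (simp add: field_simps)
    ultimately show "\<exists>u<x. H u > 0" by blast
  next
    assume "\<exists>u<x. H u > 0"
    then obtain u where "u < x" "H u > 0" by blast
    moreover have "\<delta> + \<gamma> * u > \<delta> + \<gamma> * x" using calculation(1) assms(3) by simp
    moreover have "((\<delta> + \<gamma> * u) - \<delta>) / \<gamma> = u" using assms(3) by simp
    ultimately show "\<exists>z>\<delta> + \<gamma> * x. H ((z - \<delta>) / \<gamma>) > 0" by metis
  qed
  define C where "C = {x. measure (distr M borel X) {x} \<noteq> 0}"
  have "countable C" unfolding C_def
    by (rule finite_measure.countable_support) (simp add: prob_space.finite_measure prob_space_distr assms(2))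
  then have AE: "AE x in lborel. x \<notin> C"
    by (intro AE_not_in countable_imp_null_set_lborel)
  have atom: "measure M {\<omega>\<in>space M. X \<omega> = x} = 0" if "x \<notin> C" for x
  proof -
    have "measure (distr M borel X) {x} = measure M (X -` {x} \<inter> space M)"
      using assms(2) by (intro measure_distr) auto
    also have "X -` {x} \<inter> space M = {\<omega>\<in>space M. X \<omega> = x}" by auto
    finally show ?thesis using that unfolding C_def by simp
  qed
  have GS: "G x = rv_surv M X x" and HF: "H x = rv_cdf M X x" if "x \<notin> C" for x
  proof -
    have "G x = measure M ({\<omega>\<in>space M. x < X \<omega>} \<union> {\<omega>\<in>space M. X \<omega> = x})"
      unfolding G_def by (intro arg_cong[where f="measure M"]) auto
    also have "\<dots> = measure M {\<omega>\<in>space M. x < X \<omega>} + measure M {\<omega>\<in>space M. X \<omega> = x}"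
      using assms(2) by (intro finite_measure_Union) auto
    finally show "G x = rv_surv M X x" using atom[OF that] SX by simp
    have "rv_cdf M X x = measure M ({\<omega>\<in>space M. X \<omega> < x} \<union> {\<omega>\<in>space M. X \<omega> = x})"
      unfolding FX by (intro arg_cong[where f="measure M"]) auto
    also have "\<dots> = measure M {\<omega>\<in>space M. X \<omega> < x} + measure M {\<omega>\<in>space M. X \<omega> = x}"
      using assms(2) by (intro finite_measure_Union) auto
    finally show "H x = rv_cdf M X x" using atom[OF that] H_def by simp
  qed
  have pt: "ennreal (rv_cdf M Y (\<delta> + \<gamma> * x) powr a * rv_surv M Y (\<delta> + \<gamma> * x) powr b) *
     indicator {x. supp_l M Y < ereal x \<and> ereal x < supp_r M Y} (\<delta> + \<gamma> * x)
   = ennreal (rv_cdf M X x powr b * rv_surv M X x powr a) *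
     indicator {x. supp_l M X < ereal x \<and> ereal x < supp_r M X} x" if "x \<notin> C" for x
  proof -
    have "((\<delta> + \<gamma> * x) - \<delta>) / \<gamma> = x" using assms(3) by simp
    moreover have "(\<delta> + \<gamma> * x \<in> {x. supp_l M Y < ereal x \<and> ereal x < supp_r M Y}) =
       (x \<in> {x. supp_l M X < ereal x \<and> ereal x < supp_r M X})"
      unfolding mem_Collect_eq mem_iff F S e1 e2 eG eH by blast
    ultimately show ?thesis unfolding F S indicator_def using GS[OF that] HF[OF that] by (simp add: mult.commute)
  qed
  have "cigf M Y a b = ennreal \<bar>\<gamma>\<bar> * (\<integral>\<^sup>+x. ennreal (rv_cdf M Y (\<delta> + \<gamma> * x) powr a * rv_surv M Y (\<delta> + \<gamma> * x) powr b) *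
     indicator {x. supp_l M Y < ereal x \<and> ereal x < supp_r M Y} (\<delta> + \<gamma> * x) \<partial>lborel)"
    by (rule cigf_affine[OF assms(1) Ym]) (use assms(3) in simp)
  also have "\<dots> = ennreal \<bar>\<gamma>\<bar> * cigf M X b a"
    unfolding cigf_alt[of M X]
    by (intro arg_cong[where f="\<lambda>t. ennreal \<bar>\<gamma>\<bar> * t"] nn_integral_cong_AE) (use AE pt in auto)
  finally show ?thesis unfolding Y_def .
qed

theorem theorem1:
  fixes M :: "'a measure" and X :: "'a \<Rightarrow> real" and \<gamma> \<delta> \<alpha> \<beta> :: real
  assumes "prob_space M"
    and "X \<in> borel_measurable M"
    and "\<gamma> \<noteq> 0"
  shows "(0 < \<gamma> \<longrightarrow> (\<alpha>, \<beta>) \<in> cigf_dom M X \<longrightarrow>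
            cigf M (\<lambda>\<omega>. \<gamma> * X \<omega> + \<delta>) \<alpha> \<beta> = ennreal \<gamma> * cigf M X \<alpha> \<beta>)
       \<and> (\<gamma> < 0 \<longrightarrow> (\<beta>, \<alpha>) \<in> cigf_dom M X \<longrightarrow>
            cigf M (\<lambda>\<omega>. \<gamma> * X \<omega> + \<delta>) \<alpha> \<beta> = ennreal \<bar>\<gamma>\<bar> * cigf M X \<beta> \<alpha>)"
  using pos_case[OF assms(1,2)] neg_case[OF assms(1,2)] by blast

end
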